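(* For all positive integers $t$ and $p$ there exists an antipodal $3^t5^p$-splitting of $Q_2^{2^{2t+3p}}$.
   Context: $Q_2^n=\{0,1\}^n$. For $0\le m\le n$, an $m$-face of $Q_2^n$ is given by a tuple $a=(a_1,\dots,a_n)\in\{0,1,*\}^n$ with exactly $m$ entries equal to $*$; it denotes the set $\{x\in Q_2^n : x_i=a_i \text{ whenever } a_i\in\{0,1\}\}$. The direction of a face is the set of positions of its asterisks; two faces are parallel if they have the same direction, and two parallel faces $a,b$ are antipodal if $b_i=1-a_i$ at every non-asterisk position $i$. For positive integers $k<n$, an antipodal $k$-splitting of $Q_2^n$ is a collection of exactly $2^k$ $(n-k)$-faces whose union is $Q_2^n$ and which contains no pair of parallel non-antipodal faces. *)

theory Defs
  imports Main
begin

text \<open>A face of Q_2^n is a list of length n over option bool: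
  Some False = 0, Some True = 1, None = asterisk.  Vertices of Q_2^n are
  bool lists of length n.\<close>

definition cube :: "nat \<Rightarrow> bool list set" where
  "cube n = {x. length x = n}"

definition is_face :: "nat \<Rightarrow> nat \<Rightarrow> bool option list \<Rightarrow> bool" where
  "is_face n m a \<longleftrightarrow> length a = n \<and> card {i. i < n \<and> a ! i = None} = m"

definition face_set :: "bool option list \<Rightarrow> bool list set" where
  "face_set a = {x. length x = length a \<and>
      (\<forall>i < length a. \<forall>v. a ! i = Some v \<longrightarrow> x ! i = v)}"

definition direction :: "bool option list \<Rightarrow> nat set" where
  "direction a = {i. i < length a \<and> a ! i = None}"

definition parallel :: "bool option list \<Rightarrow> bool option list \<Rightarrow> bool" where
  "parallel a b \<longleftrightarrow> length a = length b \<and> direction a = direction b"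

definition antipodal :: "bool option list \<Rightarrow> bool option list \<Rightarrow> bool" where
  "antipodal a b \<longleftrightarrow> parallel a b \<and>
     (\<forall>i < length a. a ! i \<noteq> None \<longrightarrow> b ! i = map_option Not (a ! i))"

definition antipodal_splitting :: "nat \<Rightarrow> nat \<Rightarrow> bool option list set \<Rightarrow> bool" where
  "antipodal_splitting k n F \<longleftrightarrow>
     0 < k \<and> k < n \<and>
     finite F \<and> card F = 2 ^ k \<and>
     (\<forall>a \<in> F. is_face n (n - k) a) \<and>
     (\<Union>a \<in> F. face_set a) = cube n \<and>
     (\<forall>a \<in> F. \<forall>b \<in> F. a \<noteq> b \<and> parallel a b \<longrightarrow> antipodal a b)"

end

theory Submission
  imports Defs
begin

lemma face_set_Nil: "face_set [] = {[]}"
  by (auto simp: face_set_def)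

lemma face_set_None: "face_set (None # a) = Cons True ` face_set a \<union> Cons False ` face_set a"
proof (rule set_eqI)
  fix x
  show "x \<in> face_set (None # a) \<longleftrightarrow> x \<in> Cons True ` face_set a \<union> Cons False ` face_set a"
  proof (cases x)
    case Nil
    then show ?thesis by (auto simp: face_set_def)
  next
    case (Cons y ys)
    have "x \<in> face_set (None # a) \<longleftrightarrow> ys \<in> face_set a"
      unfolding Cons face_set_def by (simp add: All_less_Suc2)
    then show ?thesis using Cons by (cases y) auto
  qed
qed

lemma face_set_Some: "face_set (Some v # a) = Cons v ` face_set a"
proof (rule set_eqI)
  fix x
  show "x \<in> face_set (Some v # a) \<longleftrightarrow> x \<in> Cons v ` face_set a"
  proof (cases x)
    case Nil
    then show ?thesis by (auto simp: face_set_def)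
  next
    case (Cons y ys)
    have "x \<in> face_set (Some v # a) \<longleftrightarrow> y = v \<and> ys \<in> face_set a"
      unfolding Cons face_set_def by (simp add: All_less_Suc2) blast
    then show ?thesis using Cons by auto
  qed
qed

lemma face_set_card: "finite (face_set a) \<and> card (face_set a) = 2 ^ length (filter (\<lambda>x. x = None) a)"
proof (induction a)
  case Nil
  then show ?case by (simp add: face_set_Nil)
next
  case (Cons x a)
  show ?case
  proof (cases x)
    case None
    have d: "Cons True ` face_set a \<inter> Cons False ` face_set a = {}" by auto
    have "card (face_set (x # a)) = card (Cons True ` face_set a) + card (Cons False ` face_set a)"
      unfolding None face_set_None using Cons.IH d by (intro card_Un_disjoint) auto
    also have "\<dots> = 2 * card (face_set a)" by (simp add: card_image)
    finally show ?thesis using Cons.IH None by (simp add: face_set_None)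
  next
    case (Some v)
    then show ?thesis using Cons.IH by (simp add: face_set_Some card_image)
  qed
qed

lemma card_direction: "card (direction a) = length (filter (\<lambda>x. x = None) a)"
  unfolding direction_def by (simp add: length_filter_conv_card)

lemma cube_face: "cube n = face_set (replicate n None)"
  by (auto simp: cube_def face_set_def)

lemma cube_card: "finite (cube n) \<and> card (cube n) = 2 ^ n"
  using face_set_card[of "replicate n None"] by (simp add: cube_face)

lemma face_set_len: "x \<in> face_set a \<Longrightarrow> length x = length a"
  by (simp add: face_set_def)

lemma is_face_card: "is_face n m a \<Longrightarrow> finite (face_set a) \<and> card (face_set a) = 2 ^ m"
  using face_set_card[of a] card_direction[of a]
  by (simp add: is_face_def direction_def)

definition good :: "nat \<Rightarrow> nat \<Rightarrow> bool option list set \<Rightarrow> bool" where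
  "good k n F \<longleftrightarrow> antipodal_splitting k n F \<and>
     (\<forall>a\<in>F. \<forall>b\<in>F. a \<noteq> b \<longrightarrow> face_set a \<inter> face_set b = {})"

fun dis1 :: "bool option \<Rightarrow> bool option \<Rightarrow> bool" where
  "dis1 (Some u) (Some v) = (u \<noteq> v)"
| "dis1 _ _ = False"

fun ant1 :: "bool option \<Rightarrow> bool option \<Rightarrow> bool" where
  "ant1 (Some u) (Some v) = (u \<noteq> v)"
| "ant1 (Some u) None = False"
| "ant1 None _ = True"

fun isN :: "bool option \<Rightarrow> bool" where
  "isN None = True"
| "isN (Some _) = False"

lemma isN_eq: "isN x = (x = None)" by (cases x) auto

lemma goodI:
  "0 < k \<Longrightarrow> k < n \<Longrightarrow> finite F \<Longrightarrow> card F = 2 ^ k \<Longrightarrow> (\<forall>a\<in>F. is_face n (n - k) a) \<Longrightarrow>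
   (\<Union>a\<in>F. face_set a) = cube n \<Longrightarrow> (\<forall>a\<in>F. \<forall>b\<in>F. a \<noteq> b \<and> parallel a b \<longrightarrow> antipodal a b) \<Longrightarrow>
   (\<forall>a\<in>F. \<forall>b\<in>F. a \<noteq> b \<longrightarrow> face_set a \<inter> face_set b = {}) \<Longrightarrow> good k n F"
  unfolding good_def antipodal_splitting_def by (intro conjI; assumption)

lemma goodD:
  assumes "good k n F"
  shows "0 < k" "k < n" "finite F" "card F = 2 ^ k" "\<forall>a\<in>F. is_face n (n - k) a"
   "(\<Union>a\<in>F. face_set a) = cube n" "\<forall>a\<in>F. \<forall>b\<in>F. a \<noteq> b \<and> parallel a b \<longrightarrow> antipodal a b"
   "\<forall>a\<in>F. \<forall>b\<in>F. a \<noteq> b \<longrightarrow> face_set a \<inter> face_set b = {}"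
  using assms by (simp_all add: good_def antipodal_splitting_def)

definition disj_ck :: "bool option list \<Rightarrow> bool option list \<Rightarrow> bool" where
  "disj_ck a b \<longleftrightarrow> list_ex (\<lambda>(x, y). dis1 x y) (zip a b)"

definition anti_ck :: "bool option list \<Rightarrow> bool option list \<Rightarrow> bool" where
  "anti_ck a b \<longleftrightarrow> list_all (\<lambda>(x, y). ant1 x y) (zip a b)"

definition check_split :: "nat \<Rightarrow> nat \<Rightarrow> bool option list list \<Rightarrow> bool" where
  "check_split k n Fs \<longleftrightarrow> 0 < k \<and> k < n \<and> distinct Fs \<and> length Fs = 2 ^ k \<and>
     list_all (\<lambda>a. length a = n \<and> length (filter isN a) = n - k) Fs \<and>
     list_all (\<lambda>a. list_all (\<lambda>b. a = b \<or> (disj_ck a b \<and>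
        (map isN a = map isN b \<longrightarrow> anti_ck a b))) Fs) Fs"

lemma disj_ck_sound:
  assumes "disj_ck a b" "length a = length b"
  shows "face_set a \<inter> face_set b = {}"
proof -
  from assms obtain i where i: "i < length a" "dis1 (a ! i) (b ! i)"
    by (auto simp: disj_ck_def list_ex_iff set_zip)
  then obtain u v where v: "a ! i = Some u" "b ! i = Some v" "u \<noteq> v"
    by (cases "a ! i"; cases "b ! i") auto
  show ?thesis
  proof (rule ccontr)
    assume "face_set a \<inter> face_set b \<noteq> {}"
    then obtain x where "x \<in> face_set a" "x \<in> face_set b" by auto
    then have "x ! i = u" "x ! i = v" using i v assms(2) by (auto simp: face_set_def)
    then show False using v by simp
  qed
qed

lemma anti_ck_sound:
  assumes "anti_ck a b" "parallel a b"
  shows "antipodal a b"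
proof -
  have l: "length a = length b" using assms by (simp add: parallel_def)
  have "\<forall>i<length a. ant1 (a ! i) (b ! i)" using assms(1) l
    by (auto simp: anti_ck_def list_all_iff set_zip)
  moreover have "\<And>x y. ant1 x y \<Longrightarrow> x \<noteq> None \<Longrightarrow> y = map_option Not x"
    by (case_tac x; case_tac y) auto
  ultimately have "\<forall>i<length a. a ! i \<noteq> None \<longrightarrow> b ! i = map_option Not (a ! i)"
    by blast
  then show ?thesis using assms(2) by (simp add: antipodal_def)
qed

lemma parallel_map:
  assumes "parallel a b"
  shows "map isN a = map isN b"
proof -
  have l: "length a = length b" using assms by (simp add: parallel_def)
  have "\<And>i. i < length a \<Longrightarrow> (a ! i = None) = (b ! i = None)"
  proof -
    fix i assume "i < length a"
    then have "i \<in> direction a \<longleftrightarrow> i \<in> direction b" using assms by (simp add: parallel_def)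
    then show "(a ! i = None) = (b ! i = None)" using \<open>i < length a\<close> l by (simp add: direction_def)
  qed
  then show ?thesis using l by (intro nth_equalityI) (auto simp: isN_eq)
qed

lemma check_sound:
  assumes "check_split k n Fs"
  shows "good k n (set Fs)"
proof -
  let ?F = "set Fs"
  have H: "0 < k \<and> k < n \<and> distinct Fs \<and> length Fs = 2 ^ k \<and>
     (\<forall>a\<in>?F. length a = n \<and> length (filter isN a) = n - k) \<and>
     (\<forall>a\<in>?F. \<forall>b\<in>?F. a = b \<or> (disj_ck a b \<and>
        (map isN a = map isN b \<longrightarrow> anti_ck a b)))"
    using assms unfolding check_split_def list_all_iff .
  have k1: "0 < k" using H by (elim conjE) assumption
  have k2: "k < n" using H by (elim conjE) assumption
  note k = k1 k2
  have dist: "distinct Fs" using H by (elim conjE) assumption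
  have len: "length Fs = 2 ^ k" using H by (elim conjE) assumption
  have faces0: "\<forall>a\<in>?F. length a = n \<and> length (filter isN a) = n - k"
    using H by (elim conjE) assumption
  have pairs: "\<forall>a\<in>?F. \<forall>b\<in>?F. a = b \<or> (disj_ck a b \<and>
        (map isN a = map isN b \<longrightarrow> anti_ck a b))"
    using H by (elim conjE) assumption
  have fi: "isN = (\<lambda>x. x = None)" using isN_eq by auto
  have faces: "\<forall>a\<in>?F. length a = n \<and> length (filter (\<lambda>x. x = None) a) = n - k"
    using faces0 unfolding fi .
  have card: "card ?F = 2 ^ k" using dist len by (simp add: distinct_card)
  have isf: "\<forall>a\<in>?F. is_face n (n - k) a"
    using faces card_direction by (auto simp: is_face_def direction_def)
  have disj: "\<forall>a\<in>?F. \<forall>b\<in>?F. a \<noteq> b \<longrightarrow> face_set a \<inter> face_set b = {}"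
  proof (intro ballI impI)
    fix a b assume ab: "a \<in> ?F" "b \<in> ?F" "a \<noteq> b"
    have Q: "disj_ck a b \<and> (map isN a = map isN b \<longrightarrow> anti_ck a b)"
      using pairs[rule_format, OF ab(1,2)]
    proof
      assume "a = b" with ab(3) show ?thesis by contradiction
    qed
    have "length a = n" "length b = n" using faces ab(1,2) by auto
    then have "length a = length b" by simp
    with Q show "face_set a \<inter> face_set b = {}" using disj_ck_sound by blast
  qed
  have anti: "\<forall>a\<in>?F. \<forall>b\<in>?F. a \<noteq> b \<and> parallel a b \<longrightarrow> antipodal a b"
  proof (intro ballI impI)
    fix a b assume ab: "a \<in> ?F" "b \<in> ?F" "a \<noteq> b \<and> parallel a b"
    have Q: "disj_ck a b \<and> (map isN a = map isN b \<longrightarrow> anti_ck a b)"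
      using pairs[rule_format, OF ab(1,2)]
    proof
      assume "a = b" with ab(3) show ?thesis by blast
    qed
    have p: "parallel a b" using ab(3) by blast
    then have "map isN a = map isN b" by (rule parallel_map)
    with Q have "anti_ck a b" by blast
    then show "antipodal a b" using p by (rule anti_ck_sound)
  qed
  have sub: "(\<Union>a\<in>?F. face_set a) \<subseteq> cube n"
    using faces by (auto simp: cube_def face_set_def)
  have fins: "\<forall>a\<in>?F. finite (face_set a)"
  proof
    fix a assume "a \<in> ?F"
    then have "is_face n (n - k) a" using isf by blast
    then show "finite (face_set a)" using is_face_card by blast
  qed
  have "card (\<Union>a\<in>?F. face_set a) = (\<Sum>a\<in>?F. card (face_set a))"
    by (rule card_UN_disjoint[OF _ fins disj]) simp
  also have "\<dots> = (\<Sum>a\<in>?F. 2 ^ (n - k))"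
  proof (rule sum.cong[OF refl])
    fix a assume "a \<in> ?F"
    then have "is_face n (n - k) a" using isf by blast
    then show "card (face_set a) = 2 ^ (n - k)" using is_face_card by blast
  qed
  also have "\<dots> = 2 ^ k * 2 ^ (n - k)" using card by simp
  also have "\<dots> = 2 ^ n" using k by (simp flip: power_add)
  finally have "card (\<Union>a\<in>?F. face_set a) = card (cube n)" using cube_card by simp
  then have U: "(\<Union>a\<in>?F. face_set a) = cube n"
    using sub cube_card by (intro card_subset_eq) auto
  show ?thesis by (rule goodI[OF k _ card isf U anti disj]) simp
qed

abbreviation "sN \<equiv> (None :: bool option)"
abbreviation "sF \<equiv> Some False"
abbreviation "sT \<equiv> Some True"

definition F4 :: "bool option list list" where
  "F4 = [[sF, sF, sN, sF],
    [sT, sN, sF, sF],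
    [sF, sT, sF, sN],
    [sT, sF, sT, sN],
    [sN, sT, sT, sF],
    [sN, sF, sF, sT],
    [sT, sT, sN, sT],
    [sF, sN, sT, sT]]"

definition F8 :: "bool option list list" where
  "F8 = [[sN, sF, sF, sN, sN, sF, sF, sF],
    [sN, sT, sT, sN, sN, sT, sT, sT],
    [sN, sF, sF, sN, sT, sT, sN, sF],
    [sN, sT, sT, sN, sF, sF, sN, sT],
    [sN, sT, sF, sF, sN, sN, sF, sF],
    [sN, sF, sT, sT, sN, sN, sT, sT],
    [sN, sT, sT, sF, sF, sN, sN, sF],
    [sN, sF, sF, sT, sT, sN, sN, sT],
    [sF, sN, sF, sN, sN, sF, sT, sF],
    [sT, sN, sT, sN, sN, sT, sF, sT],
    [sT, sN, sT, sN, sT, sT, sN, sF],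
    [sF, sN, sF, sN, sF, sF, sN, sT],
    [sF, sN, sT, sT, sN, sN, sT, sF],
    [sT, sN, sF, sF, sN, sN, sF, sT],
    [sF, sN, sT, sF, sT, sN, sN, sF],
    [sT, sN, sF, sT, sF, sN, sN, sT],
    [sT, sF, sN, sN, sN, sF, sT, sF],
    [sF, sT, sN, sN, sN, sT, sF, sT],
    [sT, sF, sN, sN, sF, sT, sN, sF],
    [sF, sT, sN, sN, sT, sF, sN, sT],
    [sF, sT, sN, sT, sN, sN, sF, sF],
    [sT, sF, sN, sF, sN, sN, sT, sT],
    [sT, sT, sN, sT, sF, sN, sN, sF],
    [sF, sF, sN, sF, sT, sN, sN, sT],
    [sT, sF, sT, sN, sN, sF, sF, sN],
    [sF, sT, sF, sN, sN, sT, sT, sN],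
    [sT, sT, sT, sN, sT, sF, sN, sN],
    [sF, sF, sF, sN, sF, sT, sN, sN],
    [sF, sF, sT, sT, sN, sN, sF, sN],
    [sT, sT, sF, sF, sN, sN, sT, sN],
    [sF, sF, sT, sF, sF, sN, sN, sN],
    [sT, sT, sF, sT, sT, sN, sN, sN]]"

lemma base4: "good 3 4 (set F4)"
proof -
  have "check_split 3 4 F4" by code_simp
  then show ?thesis by (rule check_sound)
qed

lemma base8: "good 5 8 (set F8)"
proof -
  have "check_split 5 8 F8" by code_simp
  then show ?thesis by (rule check_sound)
qed


definition hb :: "bool option list \<Rightarrow> bool" where
  "hb f = (f ! (LEAST i. i < length f \<and> f ! i \<noteq> None) = Some True)"

lemma exists_fixed:
  assumes "is_face n m a" "m < n"
  shows "\<exists>i<n. a ! i \<noteq> None"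
proof (rule ccontr)
  assume "\<not> (\<exists>i<n. a ! i \<noteq> None)"
  then have "{i. i < n \<and> a ! i = None} = {..<n}" by auto
  then show False using assms by (simp add: is_face_def)
qed

lemma parallel_nth:
  assumes p: "parallel f g" and i: "i < length f"
  shows "(f ! i = None) = (g ! i = None)"
proof -
  have "i \<in> direction f \<longleftrightarrow> i \<in> direction g" using p by (simp add: parallel_def)
  then show ?thesis using p i by (simp add: direction_def parallel_def)
qed

lemma hb_anti:
  assumes "antipodal f g" "\<exists>i<length f. f ! i \<noteq> None"
  shows "hb g = (\<not> hb f)"
proof -
  have p: "parallel f g" using assms by (simp add: antipodal_def)
  have l: "length g = length f" using p by (simp add: parallel_def)
  have P: "(\<lambda>i. i < length g \<and> g ! i \<noteq> None) = (\<lambda>i. i < length f \<and> f ! i \<noteq> None)"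
  proof (rule ext)
    fix i
    show "(i < length g \<and> g ! i \<noteq> None) = (i < length f \<and> f ! i \<noteq> None)"
      using parallel_nth[OF p, of i] l by (cases "i < length f") simp_all
  qed
  define i0 where "i0 = (LEAST i. i < length f \<and> f ! i \<noteq> None)"
  have i0: "i0 < length f \<and> f ! i0 \<noteq> None" unfolding i0_def using assms(2) by (rule LeastI_ex)
  have hg: "hb g = (g ! i0 = Some True)" unfolding hb_def P i0_def ..
  have hf: "hb f = (f ! i0 = Some True)" unfolding hb_def i0_def ..
  have g0: "g ! i0 = map_option Not (f ! i0)" using assms(1) i0 by (simp add: antipodal_def)
  obtain v where "f ! i0 = Some v" using i0 by auto
  then show ?thesis using hg hf g0 by simp
qed

definition cmpf :: "nat \<Rightarrow> nat \<Rightarrow> bool option list \<Rightarrow> (nat \<Rightarrow> bool option list) \<Rightarrow> bool option list" where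
  "cmpf n1 n2 a c = map (\<lambda>i. if a ! (i div n1) = None then None else c (i div n1) ! (i mod n1)) [0..<n1*n2]"

lemma comp_len[simp]: "length (cmpf n1 n2 a c) = n1 * n2"
  by (simp add: cmpf_def)

lemma comp_nth: "i < n1 * n2 \<Longrightarrow>
   cmpf n1 n2 a c ! i = (if a ! (i div n1) = None then None else c (i div n1) ! (i mod n1))"
  by (simp add: cmpf_def)

lemma idx: "j < n2 \<Longrightarrow> r < (n1::nat) \<Longrightarrow> j * n1 + r < n1 * n2"
proof -
  assume "j < n2" "r < n1"
  then have "j * n1 + r < j * n1 + n1" by simp
  also have "\<dots> = Suc j * n1" by simp
  also have "\<dots> \<le> n2 * n1" using \<open>j < n2\<close> by (intro mult_right_mono) auto
  finally show ?thesis by (simp add: mult.commute)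
qed

lemma idx_div: "r < (n1::nat) \<Longrightarrow> (j * n1 + r) div n1 = j"
  by simp

lemma idx_mod: "r < (n1::nat) \<Longrightarrow> (j * n1 + r) mod n1 = r"
  by simp

lemma idx2: "i < n1 * (n2::nat) \<Longrightarrow> i div n1 < n2 \<and> i mod n1 < n1"
  by (metis div_eq_0_iff less_mult_imp_div_less mod_less_divisor mult.commute
        mult_is_0 not_gr_zero not_less_zero)

lemma comp_nth2: "j < n2 \<Longrightarrow> r < n1 \<Longrightarrow>
   cmpf n1 n2 a c ! (j * n1 + r) = (if a ! j = None then None else c j ! r)"
  using comp_nth[OF idx] by simp

definition blk :: "nat \<Rightarrow> bool list \<Rightarrow> nat \<Rightarrow> bool list" where
  "blk n1 x j = map (\<lambda>r. x ! (j * n1 + r)) [0..<n1]"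

lemma blk_in:
  assumes "x \<in> face_set (cmpf n1 n2 a c)" "j < n2" "a ! j \<noteq> None" "length (c j) = n1"
  shows "blk n1 x j \<in> face_set (c j)"
  unfolding face_set_def blk_def
proof (intro CollectI conjI allI impI)
  show "length (map (\<lambda>r. x ! (j * n1 + r)) [0..<n1]) = length (c j)" using assms by simp
  fix r v assume r: "r < length (c j)" and v: "c j ! r = Some v"
  have "cmpf n1 n2 a c ! (j * n1 + r) = Some v" using comp_nth2[of j n2 r n1] assms r v by simp
  moreover have "j * n1 + r < length (cmpf n1 n2 a c)" using idx assms r by simp
  ultimately have "x ! (j * n1 + r) = v" using assms(1) by (simp add: face_set_def)
  then show "map (\<lambda>r. x ! (j * n1 + r)) [0..<n1] ! r = v" using r assms by simp
qed

lemma comp_in: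
  assumes x: "length x = n1 * n2"
    and b: "\<forall>j<n2. a ! j \<noteq> None \<longrightarrow> blk n1 x j \<in> face_set (c j)"
  shows "x \<in> face_set (cmpf n1 n2 a c)"
  unfolding face_set_def
proof (intro CollectI conjI allI impI)
  show "length x = length (cmpf n1 n2 a c)" using x by simp
  fix i v assume i: "i < length (cmpf n1 n2 a c)" and v: "cmpf n1 n2 a c ! i = Some v"
  define j where "j = i div n1"
  define r where "r = i mod n1"
  have jr: "j < n2" "r < n1" using idx2[of i n1 n2] i by (auto simp: j_def r_def)
  have ii: "i = j * n1 + r" by (simp add: j_def r_def)
  have aj: "a ! j \<noteq> None" and cj: "c j ! r = Some v"
    using v comp_nth2[OF jr, of a c] ii by (auto split: if_splits)
  have "blk n1 x j \<in> face_set (c j)" using b jr aj by simp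
  moreover have "r < length (c j)" using calculation jr by (simp add: face_set_def blk_def)
  ultimately have "blk n1 x j ! r = v" using cj by (simp add: face_set_def)
  then show "x ! i = v" using jr ii by (simp add: blk_def)
qed

lemma comp_cong:
  assumes "\<forall>j<n2. a ! j \<noteq> None \<longrightarrow> c j = d j"
  shows "cmpf n1 n2 a c = cmpf n1 n2 a d"
  unfolding cmpf_def
proof (rule map_cong[OF refl])
  fix i assume "i \<in> set [0..<n1 * n2]"
  then have "i div n1 < n2" using idx2 by auto
  then show "(if a ! (i div n1) = None then None else c (i div n1) ! (i mod n1)) =
        (if a ! (i div n1) = None then None else d (i div n1) ! (i mod n1))" using assms by auto
qed

definition compF :: "nat \<Rightarrow> nat \<Rightarrow> bool option list set \<Rightarrow> bool option list set \<Rightarrow> bool option list set" where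
  "compF n1 n2 F1 F2 = {cmpf n1 n2 a c | a c. a \<in> F2 \<and>
      (\<forall>j<n2. a ! j \<noteq> None \<longrightarrow> c j \<in> F1 \<and> a ! j = Some (hb (c j)))}"

lemma cardsum:
  fixes n :: nat
  shows "card {i. i < n \<and> P i} = (\<Sum>i<n. if P i then 1 else 0 :: nat)"
proof -
  have "(\<Sum>i<n. if P i then 1 else 0 :: nat) = (\<Sum>i\<in>{i\<in>{..<n}. P i}. 1)"
    by (rule sum.inter_filter[symmetric]) simp
  also have "\<dots> = card {i\<in>{..<n}. P i}" by simp
  also have "{i\<in>{..<n}. P i} = {i. i < n \<and> P i}" by auto
  finally show ?thesis by (rule sym)
qed

lemma blocksum:
  fixes g :: "nat \<Rightarrow> nat" and n1 n2 :: nat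
  shows "(\<Sum>i<n2 * n1. g i) = (\<Sum>j<n2. \<Sum>r<n1. g (j * n1 + r))"
proof -
  have "(\<Sum>i<n2 * n1. g i) = (\<Sum>j<n2. sum g {j * n1..<j * n1 + n1})"
    using sum.nat_group[of g n1 n2] by simp
  also have "\<dots> = (\<Sum>j<n2. \<Sum>r<n1. g (j * n1 + r))"
  proof (rule sum.cong[OF refl])
    fix j
    have "sum g {0 + j * n1..<n1 + j * n1} = sum (\<lambda>r. g (r + j * n1)) {0..<n1}"
      by (rule sum.shift_bounds_nat_ivl)
    then show "sum g {j * n1..<j * n1 + n1} = (\<Sum>r<n1. g (j * n1 + r))"
      by (simp add: add.commute lessThan_atLeast0)
  qed
  finally show ?thesis .
qed


lemma nat_arith:
  fixes n1 n2 k1 k2 :: nat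
  assumes "k1 \<le> n1" "k2 \<le> n2"
  shows "n2 * (n1 - k1) + k1 * (n2 - k2) = n1 * n2 - k1 * k2"
proof -
  have e1: "n2 * (n1 - k1) = n1 * n2 - k1 * n2" by (metis diff_mult_distrib2 mult.commute)
  have e2: "k1 * (n2 - k2) = k1 * n2 - k1 * k2" by (simp add: diff_mult_distrib2)
  have h1: "k1 * n2 \<le> n1 * n2" using assms by simp
  have h2: "k1 * k2 \<le> k1 * n2" using assms by simp
  show ?thesis unfolding e1 e2 using h1 h2 by linarith
qed

lemma face_count:
  assumes c: "\<forall>j<n2. a ! j \<noteq> None \<longrightarrow> c j \<in> F1 \<and> a ! j = Some (hb (c j))"
    and f1: "\<forall>f\<in>F1. is_face n1 (n1 - k1) f" and f2: "is_face n2 (n2 - k2) a"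
    and k: "k1 \<le> n1" "k2 \<le> n2"
  shows "is_face (n1 * n2) (n1 * n2 - k1 * k2) (cmpf n1 n2 a c)"
proof -
  let ?A = "cmpf n1 n2 a c"
  have "card {i. i < n1 * n2 \<and> ?A ! i = None} = (\<Sum>i<n2 * n1. if ?A ! i = None then 1 else 0)"
    using cardsum[of "n1 * n2" "\<lambda>i. ?A ! i = None"] by (simp add: mult.commute)
  also have "\<dots> = (\<Sum>j<n2. \<Sum>r<n1. if ?A ! (j * n1 + r) = None then 1 else 0)"
    by (rule blocksum)
  also have "\<dots> = (\<Sum>j<n2. (n1 - k1) + k1 * (if a ! j = None then 1 else 0))"
  proof (rule sum.cong[OF refl])
    fix j assume "j \<in> {..<n2}"
    then have j: "j < n2" by simp
    show "(\<Sum>r<n1. if ?A ! (j * n1 + r) = None then 1 else 0) =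
        (n1 - k1) + k1 * (if a ! j = None then 1 else 0)"
    proof (cases "a ! j = None")
      case True
      have "(\<Sum>r<n1. if ?A ! (j * n1 + r) = None then 1 else 0) = (\<Sum>r<n1. (1::nat))"
      proof (rule sum.cong[OF refl])
        fix r assume "r \<in> {..<n1}"
        then have "r < n1" by simp
        then show "(if ?A ! (j * n1 + r) = None then 1 else 0) = (1::nat)"
          using comp_nth2[OF j, of r n1 a c] True by simp
      qed
      then show ?thesis using True k by simp
    next
      case False
      then have cj: "c j \<in> F1" using c j by blast
      then have fc: "is_face n1 (n1 - k1) (c j)" using f1 by blast
      have "(\<Sum>r<n1. if ?A ! (j * n1 + r) = None then 1 else 0) =
          (\<Sum>r<n1. if c j ! r = None then 1 else (0::nat))"
      proof (rule sum.cong[OF refl])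
        fix r assume "r \<in> {..<n1}"
        then have "r < n1" by simp
        then show "(if ?A ! (j * n1 + r) = None then 1 else 0) = (if c j ! r = None then 1 else (0::nat))"
          using comp_nth2[OF j, of r n1 a c] False by simp
      qed
      also have "\<dots> = card {r. r < n1 \<and> c j ! r = None}" by (rule cardsum[symmetric])
      also have "\<dots> = n1 - k1" using fc by (simp add: is_face_def)
      finally show ?thesis using False by auto
    qed
  qed
  also have "\<dots> = n2 * (n1 - k1) + k1 * (\<Sum>j<n2. if a ! j = None then 1 else 0)"
    by (simp add: sum.distrib sum_distrib_left)
  also have "(\<Sum>j<n2. if a ! j = None then 1 else 0) = n2 - k2"
    using cardsum[of n2 "\<lambda>j. a ! j = None"] f2 by (simp add: is_face_def)
  also have "n2 * (n1 - k1) + k1 * (n2 - k2) = n1 * n2 - k1 * k2" using k by (rule nat_arith)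
  finally have "card {i. i < n1 * n2 \<and> ?A ! i = None} = n1 * n2 - k1 * k2" .
  then show ?thesis by (simp add: is_face_def)
qed


lemma compose:
  assumes G1: "good k1 n1 F1" and G2: "good k2 n2 F2"
  shows "good (k1 * k2) (n1 * n2) (compF n1 n2 F1 F2)"
proof -
  let ?F = "compF n1 n2 F1 F2"
  let ?V = "\<lambda>a c. a \<in> F2 \<and> (\<forall>j<n2. a ! j \<noteq> None \<longrightarrow> c j \<in> F1 \<and> a ! j = Some (hb (c j)))"
  note g1 = goodD[OF G1] and g2 = goodD[OF G2]
  have k1: "0 < k1" "k1 < n1" using g1(1,2) .
  have k2: "0 < k2" "k2 < n2" using g2(1,2) .
  have f1: "is_face n1 (n1 - k1) f" if "f \<in> F1" for f using g1(5) that by blast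
  have f2: "is_face n2 (n2 - k2) f" if "f \<in> F2" for f using g2(5) that by blast
  have len1: "length f = n1" if "f \<in> F1" for f using f1[OF that] by (simp add: is_face_def)
  have len2: "length f = n2" if "f \<in> F2" for f using f2[OF that] by (simp add: is_face_def)
  have fx1: "\<exists>r<n1. f ! r \<noteq> None" if "f \<in> F1" for f
    using exists_fixed[OF f1[OF that]] k1 by simp
  have cov1: "\<exists>f\<in>F1. y \<in> face_set f" if "y \<in> cube n1" for y
  proof -
    have "y \<in> (\<Union>f\<in>F1. face_set f)" using that g1(6) by simp
    then show ?thesis by blast
  qed
  have cov2: "\<exists>f\<in>F2. y \<in> face_set f" if "y \<in> cube n2" for y
  proof -
    have "y \<in> (\<Union>f\<in>F2. face_set f)" using that g2(6) by simp
    then show ?thesis by blast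
  qed
  have anti1: "antipodal f g" if "f \<in> F1" "g \<in> F1" "f \<noteq> g" "parallel f g" for f g
    using g1(7) that by blast
  have anti2: "antipodal f g" if "f \<in> F2" "g \<in> F2" "f \<noteq> g" "parallel f g" for f g
    using g2(7) that by blast
  have disj1: "f = g" if "f \<in> F1" "g \<in> F1" "x \<in> face_set f" "x \<in> face_set g" for f g x
  proof (rule ccontr)
    assume "f \<noteq> g"
    then have "face_set f \<inter> face_set g = {}" using g1(8) that(1,2) by blast
    then show False using that(3,4) by blast
  qed
  have disj2: "f = g" if "f \<in> F2" "g \<in> F2" "x \<in> face_set f" "x \<in> face_set g" for f g x
  proof (rule ccontr)
    assume "f \<noteq> g"
    then have "face_set f \<inter> face_set g = {}" using g2(8) that(1,2) by blast
    then show False using that(3,4) by blast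
  qed
  have hb1: "hb g = (\<not> hb f)" if "f \<in> F1" "g \<in> F1" "f \<noteq> g" "parallel f g" for f g
  proof -
    have "antipodal f g" using anti1 that by blast
    moreover have "\<exists>i<length f. f ! i \<noteq> None" using fx1[OF that(1)] len1[OF that(1)] by simp
    ultimately show ?thesis by (rule hb_anti)
  qed
  have memF: "\<exists>a c. A = cmpf n1 n2 a c \<and> ?V a c" if "A \<in> ?F" for A
    using that unfolding compF_def by blast
  have inF: "cmpf n1 n2 a c \<in> ?F" if "?V a c" for a c
    using that unfolding compF_def by blast

  have isf: "\<forall>A\<in>?F. is_face (n1 * n2) (n1 * n2 - k1 * k2) A"
  proof
    fix A assume "A \<in> ?F"
    then obtain a c where A: "A = cmpf n1 n2 a c" and V: "?V a c" using memF by blast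
    have "is_face (n1 * n2) (n1 * n2 - k1 * k2) (cmpf n1 n2 a c)"
    proof (rule face_count)
      show "\<forall>j<n2. a ! j \<noteq> None \<longrightarrow> c j \<in> F1 \<and> a ! j = Some (hb (c j))" using V by blast
      show "\<forall>f\<in>F1. is_face n1 (n1 - k1) f" using f1 by blast
      show "is_face n2 (n2 - k2) a" using V f2 by blast
      show "k1 \<le> n1" "k2 \<le> n2" using k1 k2 by simp_all
    qed
    then show "is_face (n1 * n2) (n1 * n2 - k1 * k2) A" using A by simp
  qed

  have cover: "(\<Union>A\<in>?F. face_set A) = cube (n1 * n2)"
  proof
    show "(\<Union>A\<in>?F. face_set A) \<subseteq> cube (n1 * n2)"
    proof
      fix x assume "x \<in> (\<Union>A\<in>?F. face_set A)"
      then obtain A where A: "A \<in> ?F" "x \<in> face_set A" by blast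
      then obtain a c where "A = cmpf n1 n2 a c" using memF by blast
      then show "x \<in> cube (n1 * n2)" using A(2) by (simp add: cube_def face_set_def)
    qed
    show "cube (n1 * n2) \<subseteq> (\<Union>A\<in>?F. face_set A)"
    proof
      fix x assume x: "x \<in> cube (n1 * n2)"
      define c where "c j = (SOME f. f \<in> F1 \<and> blk n1 x j \<in> face_set f)" for j
      have c: "c j \<in> F1 \<and> blk n1 x j \<in> face_set (c j)" for j
      proof -
        have "blk n1 x j \<in> cube n1" by (simp add: blk_def cube_def)
        then obtain f where f: "f \<in> F1" "blk n1 x j \<in> face_set f" using cov1 by blast
        show ?thesis unfolding c_def
          by (rule someI[of "\<lambda>f. f \<in> F1 \<and> blk n1 x j \<in> face_set f" f]) (use f in blast)
      qed
      define \<beta> where "\<beta> = map (\<lambda>j. hb (c j)) [0..<n2]"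
      have "\<beta> \<in> cube n2" by (simp add: \<beta>_def cube_def)
      then obtain a where a: "a \<in> F2" "\<beta> \<in> face_set a" using cov2 by blast
      have V: "?V a c"
      proof (intro conjI allI impI)
        show "a \<in> F2" by (fact a(1))
        fix j assume j: "j < n2" "a ! j \<noteq> None"
        show "c j \<in> F1" using c by blast
        from j obtain v where v: "a ! j = Some v" by auto
        have "length a = n2" using len2 a(1) by blast
        then have "\<beta> ! j = v" using a(2) v j by (simp add: face_set_def)
        then have "v = hb (c j)" using j by (simp add: \<beta>_def)
        then show "a ! j = Some (hb (c j))" using v by simp
      qed
      have "x \<in> face_set (cmpf n1 n2 a c)"
      proof (rule comp_in)
        show "length x = n1 * n2" using x by (simp add: cube_def)
        show "\<forall>j<n2. a ! j \<noteq> None \<longrightarrow> blk n1 x j \<in> face_set (c j)" using c by blast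
      qed
      moreover have "cmpf n1 n2 a c \<in> ?F" using inF V by blast
      ultimately show "x \<in> (\<Union>A\<in>?F. face_set A)" by blast
    qed
  qed

  have disj: "\<forall>A\<in>?F. \<forall>B\<in>?F. A \<noteq> B \<longrightarrow> face_set A \<inter> face_set B = {}"
  proof (intro ballI impI)
    fix A B assume A: "A \<in> ?F" and B: "B \<in> ?F" and AB: "A \<noteq> B"
    obtain a c where Ac: "A = cmpf n1 n2 a c" and Va: "?V a c" using memF[OF A] by blast
    obtain b d where Bd: "B = cmpf n1 n2 b d" and Vb: "?V b d" using memF[OF B] by blast
    show "face_set A \<inter> face_set B = {}"
    proof (rule ccontr)
      assume "face_set A \<inter> face_set B \<noteq> {}"
      then obtain x where xA: "x \<in> face_set A" and xB: "x \<in> face_set B" by blast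
      define e where "e j = (SOME f. f \<in> F1 \<and> blk n1 x j \<in> face_set f)" for j
      have ce: "c j = e j" if j: "j < n2" "a ! j \<noteq> None" for j
      proof -
        have cj: "c j \<in> F1" using Va j by blast
        have xb: "blk n1 x j \<in> face_set (c j)"
          using blk_in[OF xA[unfolded Ac] j len1[OF cj]] .
        have "e j \<in> F1 \<and> blk n1 x j \<in> face_set (e j)" unfolding e_def
          by (rule someI[of "\<lambda>f. f \<in> F1 \<and> blk n1 x j \<in> face_set f" "c j"]) (use cj xb in blast)
        then show ?thesis using disj1[OF cj _ xb] by blast
      qed
      have de: "d j = e j" if j: "j < n2" "b ! j \<noteq> None" for j
      proof -
        have cj: "d j \<in> F1" using Vb j by blast
        have xb: "blk n1 x j \<in> face_set (d j)"
          using blk_in[OF xB[unfolded Bd] j len1[OF cj]] .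
        have "e j \<in> F1 \<and> blk n1 x j \<in> face_set (e j)" unfolding e_def
          by (rule someI[of "\<lambda>f. f \<in> F1 \<and> blk n1 x j \<in> face_set f" "d j"]) (use cj xb in blast)
        then show ?thesis using disj1[OF cj _ xb] by blast
      qed
      define \<beta> where "\<beta> = map (\<lambda>j. hb (e j)) [0..<n2]"
      have \<beta>a: "\<beta> \<in> face_set a"
        unfolding face_set_def
      proof (intro CollectI conjI allI impI)
        have la: "length a = n2" using len2 Va by blast
        then show "length \<beta> = length a" by (simp add: \<beta>_def)
        fix i v assume i: "i < length a" and v: "a ! i = Some v"
        then have i2: "i < n2" using la by simp
        have "a ! i = Some (hb (c i))" using Va i2 v by blast
        then have "v = hb (e i)" using v ce[OF i2] by simp
        then show "\<beta> ! i = v" using i2 by (simp add: \<beta>_def)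
      qed
      have \<beta>b: "\<beta> \<in> face_set b"
        unfolding face_set_def
      proof (intro CollectI conjI allI impI)
        have la: "length b = n2" using len2 Vb by blast
        then show "length \<beta> = length b" by (simp add: \<beta>_def)
        fix i v assume i: "i < length b" and v: "b ! i = Some v"
        then have i2: "i < n2" using la by simp
        have "b ! i = Some (hb (d i))" using Vb i2 v by blast
        then have "v = hb (e i)" using v de[OF i2] by simp
        then show "\<beta> ! i = v" using i2 by (simp add: \<beta>_def)
      qed
      have ab: "a = b" using disj2[OF _ _ \<beta>a \<beta>b] Va Vb by blast
      have "\<forall>j<n2. a ! j \<noteq> None \<longrightarrow> c j = d j"
        using ce de ab by simp
      then have "cmpf n1 n2 a c = cmpf n1 n2 a d" by (rule comp_cong)
      then have "A = B" using Ac Bd ab by simp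
      with AB show False by contradiction
    qed
  qed

  have anti: "\<forall>A\<in>?F. \<forall>B\<in>?F. A \<noteq> B \<and> parallel A B \<longrightarrow> antipodal A B"
  proof (intro ballI impI)
    fix A B assume A: "A \<in> ?F" and B: "B \<in> ?F" and AB: "A \<noteq> B \<and> parallel A B"
    obtain a c where Ac: "A = cmpf n1 n2 a c" and Va: "?V a c" using memF[OF A] by blast
    obtain b d where Bd: "B = cmpf n1 n2 b d" and Vb: "?V b d" using memF[OF B] by blast
    have pAB: "parallel A B" using AB by blast
    have N: "(A ! i = None) = (B ! i = None)" if "i < n1 * n2" for i
      using parallel_nth[OF pAB, of i] that Ac by simp
    have Nab: "(a ! j = None) = (b ! j = None)" if j: "j < n2" for j
    proof
      assume aj: "a ! j = None"
      show "b ! j = None"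
      proof (rule ccontr)
        assume bj: "b ! j \<noteq> None"
        then have "d j \<in> F1" using Vb j by blast
        then obtain r where r: "r < n1" "d j ! r \<noteq> None" using fx1 by blast
        have "B ! (j * n1 + r) \<noteq> None" using comp_nth2[OF j r(1), of b d] bj r Bd by simp
        moreover have "A ! (j * n1 + r) = None" using comp_nth2[OF j r(1), of a c] aj Ac by simp
        ultimately show False using N[OF idx[OF j r(1)]] by simp
      qed
    next
      assume bj: "b ! j = None"
      show "a ! j = None"
      proof (rule ccontr)
        assume aj: "a ! j \<noteq> None"
        then have "c j \<in> F1" using Va j by blast
        then obtain r where r: "r < n1" "c j ! r \<noteq> None" using fx1 by blast
        have "A ! (j * n1 + r) \<noteq> None" using comp_nth2[OF j r(1), of a c] aj r Ac by simp
        moreover have "B ! (j * n1 + r) = None" using comp_nth2[OF j r(1), of b d] bj Bd by simp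
        ultimately show False using N[OF idx[OF j r(1)]] by simp
      qed
    qed
    have pcd: "parallel (c j) (d j)" if j: "j < n2" and aj: "a ! j \<noteq> None" for j
    proof -
      have bj: "b ! j \<noteq> None" using Nab[OF j] aj by simp
      have cj: "c j \<in> F1" using Va j aj by blast
      have dj: "d j \<in> F1" using Vb j bj by blast
      have lc: "length (c j) = n1" "length (d j) = n1" using len1 cj dj by auto
      have "direction (c j) = direction (d j)"
      proof (rule set_eqI)
        fix r
        show "r \<in> direction (c j) \<longleftrightarrow> r \<in> direction (d j)"
        proof (cases "r < n1")
          case True
          have "A ! (j * n1 + r) = c j ! r" using comp_nth2[OF j True, of a c] aj Ac by simp
          moreover have "B ! (j * n1 + r) = d j ! r" using comp_nth2[OF j True, of b d] bj Bd by simp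
          ultimately show ?thesis using N[OF idx[OF j True]] lc True by (simp add: direction_def)
        next
          case False
          then show ?thesis using lc by (simp add: direction_def)
        qed
      qed
      then show ?thesis using lc by (simp add: parallel_def)
    qed
    show "antipodal A B"
    proof (cases "a = b")
      case True
      have "c j = d j" if j: "j < n2" and aj: "a ! j \<noteq> None" for j
      proof (rule ccontr)
        assume ne: "c j \<noteq> d j"
        have cj: "c j \<in> F1" using Va j aj by blast
        have bj: "b ! j \<noteq> None" using aj True by simp
        have dj: "d j \<in> F1" using Vb j bj by blast
        have "hb (d j) = (\<not> hb (c j))" using hb1[OF cj dj ne pcd[OF j aj]] .
        moreover have "a ! j = Some (hb (c j))" using Va j aj by blast
        moreover have "b ! j = Some (hb (d j))" using Vb j bj by blast
        ultimately show False using True by simp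
      qed
      then have "cmpf n1 n2 a c = cmpf n1 n2 a d" using comp_cong by blast
      then have "A = B" using Ac Bd True by simp
      with AB show ?thesis by blast
    next
      case False
      have la: "length a = n2" using len2 Va by blast
      have lb: "length b = n2" using len2 Vb by blast
      have "direction a = direction b"
        using Nab la lb by (auto simp: direction_def)
      then have pab: "parallel a b" using la lb by (simp add: parallel_def)
      have aab: "antipodal a b" using anti2 Va Vb False pab by blast
      show ?thesis
        unfolding antipodal_def
      proof (intro conjI allI impI)
        show "parallel A B" by (fact pAB)
        fix i assume i: "i < length A" and Ai: "A ! i \<noteq> None"
        define j where "j = i div n1"
        define r where "r = i mod n1"
        have iN: "i < n1 * n2" using i Ac by simp
        have jr: "j < n2" "r < n1" using idx2[OF iN] by (simp_all add: j_def r_def)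
        have ii: "i = j * n1 + r" by (simp add: j_def r_def)
        have aj: "a ! j \<noteq> None"
        proof
          assume "a ! j = None"
          then have "A ! i = None" using comp_nth2[OF jr, of a c] Ac ii by simp
          with Ai show False by contradiction
        qed
        have bj: "b ! j \<noteq> None" using Nab[OF jr(1)] aj by simp
        have cj: "c j \<in> F1" using Va jr aj by blast
        have dj: "d j \<in> F1" using Vb jr bj by blast
        have Acj: "A ! i = c j ! r" using comp_nth2[OF jr, of a c] Ac ii aj by simp
        have Bdj: "B ! i = d j ! r" using comp_nth2[OF jr, of b d] Bd ii bj by simp
        have ha: "a ! j = Some (hb (c j))" using Va jr aj by blast
        have hb': "b ! j = Some (hb (d j))" using Vb jr bj by blast
        have "b ! j = map_option Not (a ! j)" using aab aj jr la by (simp add: antipodal_def)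
        then have "hb (d j) = (\<not> hb (c j))" using ha hb' by simp
        then have "c j \<noteq> d j" by auto
        then have "antipodal (c j) (d j)" using anti1[OF cj dj _ pcd[OF jr(1) aj]] by blast
        moreover have "c j ! r \<noteq> None" using Ai Acj by simp
        moreover have "r < length (c j)" using len1[OF cj] jr by simp
        ultimately have "d j ! r = map_option Not (c j ! r)" by (simp add: antipodal_def)
        then show "B ! i = map_option Not (A ! i)" using Acj Bdj by simp
      qed
    qed
  qed

  have fin: "finite ?F"
  proof (rule finite_subset)
    show "?F \<subseteq> {xs. set xs \<subseteq> UNIV \<and> length xs = n1 * n2}"
    proof
      fix A assume "A \<in> ?F"
      then obtain a c where "A = cmpf n1 n2 a c" using memF by blast
      then show "A \<in> {xs. set xs \<subseteq> UNIV \<and> length xs = n1 * n2}" by simp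
    qed
    show "finite {xs :: bool option list. set xs \<subseteq> UNIV \<and> length xs = n1 * n2}"
      by (rule finite_lists_length_eq) simp
  qed
  have K0: "0 < k1 * k2" using k1 k2 by simp
  have KN: "k1 * k2 < n1 * n2" using k1 k2 by (intro mult_strict_mono) simp_all
  have fins: "\<forall>A\<in>?F. finite (face_set A)"
  proof
    fix A assume "A \<in> ?F"
    then show "finite (face_set A)" using isf is_face_card by blast
  qed
  have "card (cube (n1 * n2)) = card (\<Union>A\<in>?F. face_set A)" using cover by simp
  also have "\<dots> = (\<Sum>A\<in>?F. card (face_set A))"
    by (rule card_UN_disjoint[OF fin fins disj])
  also have "\<dots> = (\<Sum>A\<in>?F. 2 ^ (n1 * n2 - k1 * k2))"
  proof (rule sum.cong[OF refl])
    fix A assume "A \<in> ?F"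
    then have "is_face (n1 * n2) (n1 * n2 - k1 * k2) A" using isf by blast
    then show "card (face_set A) = 2 ^ (n1 * n2 - k1 * k2)" using is_face_card by blast
  qed
  also have "\<dots> = card ?F * 2 ^ (n1 * n2 - k1 * k2)" by simp
  finally have e: "card ?F * 2 ^ (n1 * n2 - k1 * k2) = 2 ^ (k1 * k2) * 2 ^ (n1 * n2 - k1 * k2)"
    using cube_card KN by (simp flip: power_add)
  have card: "card ?F = 2 ^ (k1 * k2)"
    using e by simp
  show ?thesis by (rule goodI[OF K0 KN fin card isf cover anti disj])
qed

lemma pow_good:
  assumes "good k n F"
  shows "\<exists>G. good (k ^ Suc m) (n ^ Suc m) G"
proof (induction m)
  case 0
  then show ?case using assms by auto
next
  case (Suc m)
  then obtain G where "good (k ^ Suc m) (n ^ Suc m) G" by blast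
  then have "good (k ^ Suc m * k) (n ^ Suc m * n) (compF (n ^ Suc m) n G F)"
    using assms by (rule compose)
  then show ?case by (metis power_Suc2)
qed


theorem corollary1:
  fixes t p :: nat
  assumes "0 < t" and "0 < p"
  shows "\<exists>F. antipodal_splitting (3 ^ t * 5 ^ p) (2 ^ (2 * t + 3 * p)) F"
proof -
  obtain t' where t: "t = Suc t'" using assms(1) by (cases t) auto
  obtain p' where p: "p = Suc p'" using assms(2) by (cases p) auto
  obtain G1 where G1: "good (3 ^ Suc t') (4 ^ Suc t') G1" using pow_good[OF base4] by blast
  obtain G2 where G2: "good (5 ^ Suc p') (8 ^ Suc p') G2" using pow_good[OF base8] by blast
  have "good (3 ^ t * 5 ^ p) (4 ^ t * 8 ^ p) (compF (4 ^ t) (8 ^ p) G1 G2)"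
    using compose[OF G1 G2] t p by simp
  moreover have "(4::nat) ^ t * 8 ^ p = 2 ^ (2 * t + 3 * p)"
    by (simp add: power_add power_mult)
  ultimately have "good (3 ^ t * 5 ^ p) (2 ^ (2 * t + 3 * p)) (compF (4 ^ t) (8 ^ p) G1 G2)"
    by simp
  then show ?thesis unfolding good_def by blast
qed

end
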